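(* Let $\Sigma_{\mathrm{ID}}$ be a set of unary inclusion dependencies and $\Sigma_{\mathrm{FD}}$ a set of functional dependencies. Let $I$ and $N$ be instances and $\Delta:=\mathrm{Adom}(I)\cap\mathrm{Adom}(N)$. Assume that $I$ satisfies $\Sigma_{\mathrm{FD}}\cup\Sigma_{\mathrm{ID}}$, that $I\cup N$ satisfies $\Sigma_{\mathrm{FD}}$, and that whenever $a\in\Delta$ occurs at a position $(R,i)$ in $N$ then it also occurs at position $(R,i)$ in $I$. Let $W$ denote the result of chasing $N$ by $\Sigma_{\mathrm{ID}}$ where no trigger mapping an exported variable to an element of $\Delta$ is ever fired. Then $I\cup W$ satisfies $\Sigma_{\mathrm{ID}}\cup\Sigma_{\mathrm{FD}}$.
   Context: A unary inclusion dependency (UID) is a TGD $R(\vec x)\rightarrow\exists\vec y\,S(\vec z)$ with single body and head atoms, no repeated variables, and exactly one exported variable (variable of the body occurring in the head). A functional dependency $D\rightarrow j$ on $R$ asserts that two $R$-facts agreeing on positions in $D$ agree on position $j$. $\mathrm{Adom}(I)$ is the set of values occurring in $I$; an element $a$ occurs at position $(R,i)$ in an instance if some $R$-fact has $a$ as its $i$-th argument. A trigger for a TGD in an instance is a homomorphism from its body to the instance; it is active if it does not extend to a homomorphism of the head. The chase repeatedly fires active triggers (fairly, in rounds), adding facts that instantiate the head with fresh elements (nulls) for existential variables; the result may be infinite. *)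

theory Defs
  imports Main
begin

text \<open>A fact is a relation name together with a tuple of values (positions are
0-based list indices). An instance is a (possibly infinite) set of facts.
A schema assigns an arity to every relation name.\<close>

type_synonym ('r, 'v) fact = "'r \<times> 'v list"
type_synonym ('r, 'v) inst = "('r, 'v) fact set"

definition adom :: "('r, 'v) inst \<Rightarrow> 'v set" where
  "adom I = (\<Union>(R, t)\<in>I. set t)"

definition wf_instance :: "('r \<Rightarrow> nat) \<Rightarrow> ('r, 'v) inst \<Rightarrow> bool" where
  "wf_instance ar I \<longleftrightarrow> (\<forall>(R, t)\<in>I. length t = ar R)"

definition occurs_at :: "('r, 'v) inst \<Rightarrow> 'v \<Rightarrow> 'r \<Rightarrow> nat \<Rightarrow> bool" where
  "occurs_at I a R i \<longleftrightarrow> (\<exists>t. (R, t) \<in> I \<and> i < length t \<and> t ! i = a)"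

datatype ('r, 'x) atom = Atom 'r "'x list"

fun atom_rel :: "('r, 'x) atom \<Rightarrow> 'r" where "atom_rel (Atom R xs) = R"
fun atom_args :: "('r, 'x) atom \<Rightarrow> 'x list" where "atom_args (Atom R xs) = xs"

definition atom_vars :: "('r, 'x) atom \<Rightarrow> 'x set" where
  "atom_vars A = set (atom_args A)"

text \<open>A TGD with a single body atom and a single head atom:
  body(x) --> exists y. head(z); the existential variables are the head variables
  not occurring in the body.\<close>
type_synonym ('r, 'x) tgd = "('r, 'x) atom \<times> ('r, 'x) atom"

definition tgd_body :: "('r, 'x) tgd \<Rightarrow> ('r, 'x) atom" where "tgd_body \<tau> = fst \<tau>"
definition tgd_head :: "('r, 'x) tgd \<Rightarrow> ('r, 'x) atom" where "tgd_head \<tau> = snd \<tau>"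

definition exported_vars :: "('r, 'x) tgd \<Rightarrow> 'x set" where
  "exported_vars \<tau> = atom_vars (tgd_body \<tau>) \<inter> atom_vars (tgd_head \<tau>)"

definition is_UID :: "('r \<Rightarrow> nat) \<Rightarrow> ('r, 'x) tgd \<Rightarrow> bool" where
  "is_UID ar \<tau> \<longleftrightarrow>
     length (atom_args (tgd_body \<tau>)) = ar (atom_rel (tgd_body \<tau>)) \<and>
     length (atom_args (tgd_head \<tau>)) = ar (atom_rel (tgd_head \<tau>)) \<and>
     distinct (atom_args (tgd_body \<tau>)) \<and> distinct (atom_args (tgd_head \<tau>)) \<and>
     card (exported_vars \<tau>) = 1"

definition atom_maps :: "('x \<Rightarrow> 'v) \<Rightarrow> ('r, 'x) atom \<Rightarrow> ('r, 'v) inst \<Rightarrow> bool" where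
  "atom_maps h A I \<longleftrightarrow> (atom_rel A, map h (atom_args A)) \<in> I"

definition trigger :: "('r, 'x) tgd \<Rightarrow> ('r, 'v) inst \<Rightarrow> ('x \<Rightarrow> 'v) \<Rightarrow> bool" where
  "trigger \<tau> I h \<longleftrightarrow> atom_maps h (tgd_body \<tau>) I"

definition active_trigger :: "('r, 'x) tgd \<Rightarrow> ('r, 'v) inst \<Rightarrow> ('x \<Rightarrow> 'v) \<Rightarrow> bool" where
  "active_trigger \<tau> I h \<longleftrightarrow> trigger \<tau> I h \<and>
     \<not> (\<exists>h'. (\<forall>x\<in>atom_vars (tgd_body \<tau>). h' x = h x) \<and> atom_maps h' (tgd_head \<tau>) I)"

definition satisfies_tgd :: "('r, 'v) inst \<Rightarrow> ('r, 'x) tgd \<Rightarrow> bool" where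
  "satisfies_tgd I \<tau> \<longleftrightarrow> (\<forall>h. \<not> active_trigger \<tau> I h)"

text \<open>An FD (R, D, j) stands for D -> j on R.\<close>
type_synonym 'r fd = "'r \<times> nat set \<times> nat"

definition is_FD :: "('r \<Rightarrow> nat) \<Rightarrow> 'r fd \<Rightarrow> bool" where
  "is_FD ar \<phi> \<longleftrightarrow> (case \<phi> of (R, D, j) \<Rightarrow> D \<subseteq> {..<ar R} \<and> j < ar R)"

definition satisfies_fd :: "('r, 'v) inst \<Rightarrow> 'r fd \<Rightarrow> bool" where
  "satisfies_fd I \<phi> \<longleftrightarrow> (case \<phi> of (R, D, j) \<Rightarrow>
     (\<forall>t t'. (R, t) \<in> I \<longrightarrow> (R, t') \<in> I \<longrightarrow> (\<forall>i\<in>D. t ! i = t' ! i) \<longrightarrow> t ! j = t' ! j))"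

text \<open>Firing trigger h of \<tau> on instance C: add the head instantiated by an extension h'
of h that sends the existential variables injectively to fresh nulls, i.e. elements
not in the current instance and not in the reserved set U of already used
values (U accounts for globally fresh nulls).\<close>
definition fire :: "'v set \<Rightarrow> ('r, 'x) tgd \<Rightarrow> ('r, 'v) inst \<Rightarrow> ('x \<Rightarrow> 'v)
    \<Rightarrow> ('r, 'v) inst \<Rightarrow> bool" where
  "fire U \<tau> C h C' \<longleftrightarrow> (\<exists>h'.
     (\<forall>x\<in>atom_vars (tgd_body \<tau>). h' x = h x) \<and>
     inj_on h' (atom_vars (tgd_head \<tau>) - atom_vars (tgd_body \<tau>)) \<and>
     h' ` (atom_vars (tgd_head \<tau>) - atom_vars (tgd_body \<tau>)) \<inter> (adom C \<union> U) = {} \<and>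
     C' = insert (atom_rel (tgd_head \<tau>), map h' (atom_args (tgd_head \<tau>))) C)"

definition allowed_trigger :: "'v set \<Rightarrow> ('r, 'x) tgd \<Rightarrow> ('r, 'v) inst \<Rightarrow> ('x \<Rightarrow> 'v) \<Rightarrow> bool" where
  "allowed_trigger \<Delta> \<tau> C h \<longleftrightarrow> active_trigger \<tau> C h \<and> (\<forall>x\<in>exported_vars \<tau>. h x \<notin> \<Delta>)"

text \<open>A fair chase sequence of N by \<Sigma> in which no trigger mapping an exported variable
into Delta is fired: each step fires one allowed active trigger (or stays put if
there is none), and every allowed active trigger eventually becomes inactive.\<close>
definition chase_seq :: "'v set \<Rightarrow> 'v set \<Rightarrow> ('r, 'x) tgd set \<Rightarrow> ('r, 'v) inst
    \<Rightarrow> (nat \<Rightarrow> ('r, 'v) inst) \<Rightarrow> bool" where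
  "chase_seq U \<Delta> \<Sigma> N C \<longleftrightarrow>
     C 0 = N \<and>
     (\<forall>k. (\<exists>\<tau>\<in>\<Sigma>. \<exists>h. allowed_trigger \<Delta> \<tau> (C k) h \<and> fire U \<tau> (C k) h (C (Suc k)))
          \<or> ((\<forall>\<tau>\<in>\<Sigma>. \<forall>h. \<not> allowed_trigger \<Delta> \<tau> (C k) h) \<and> C (Suc k) = C k)) \<and>
     (\<forall>k. \<forall>\<tau>\<in>\<Sigma>. \<forall>h. allowed_trigger \<Delta> \<tau> (C k) h \<longrightarrow>
          (\<exists>m\<ge>k. \<not> active_trigger \<tau> (C m) h))"

definition chase_result :: "'v set \<Rightarrow> 'v set \<Rightarrow> ('r, 'x) tgd set \<Rightarrow> ('r, 'v) inst
    \<Rightarrow> ('r, 'v) inst \<Rightarrow> bool" where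
  "chase_result U \<Delta> \<Sigma> N W \<longleftrightarrow> (\<exists>C. chase_seq U \<Delta> \<Sigma> N C \<and> W = (\<Union>k. C k))"

end

theory Submission
  imports Defs
begin

lemma some_idx:
  assumes "distinct xs" "i < length xs"
  shows "(SOME j. j < length xs \<and> xs ! j = xs ! i) = i"
proof -
  have "\<exists>j. j < length xs \<and> xs ! j = xs ! i" using assms by blast
  then have "(SOME j. j < length xs \<and> xs ! j = xs ! i) < length xs \<and>
      xs ! (SOME j. j < length xs \<and> xs ! j = xs ! i) = xs ! i"
    by (rule someI_ex)
  then show ?thesis using assms nth_eq_iff_index_eq by blast
qed

lemma map_idx:
  assumes "distinct xs" "length ys = length xs"
  shows "map (\<lambda>z. ys ! (SOME j. j < length xs \<and> xs ! j = z)) xs = ys"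
  by (rule nth_equalityI) (use assms in \<open>auto simp: some_idx\<close>)

lemma head_witness:
  assumes U: "is_UID ar \<tau>" and ex: "exported_vars \<tau> = {x}"
    and tf: "(atom_rel (tgd_head \<tau>), tf) \<in> C" "length tf = ar (atom_rel (tgd_head \<tau>))"
    and d: "d < length (atom_args (tgd_head \<tau>))" "atom_args (tgd_head \<tau>) ! d = x" "tf ! d = h x"
  shows "\<exists>h'. (\<forall>z\<in>atom_vars (tgd_body \<tau>). h' z = h z) \<and> atom_maps h' (tgd_head \<tau>) C"
proof -
  let ?hs = "atom_args (tgd_head \<tau>)"
  define h' where "h' z = (if z \<in> atom_vars (tgd_body \<tau>) then h z
      else tf ! (SOME j. j < length ?hs \<and> ?hs ! j = z))" for z
  have dist: "distinct ?hs" and len: "length tf = length ?hs" using U tf unfolding is_UID_def by auto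
  have "map h' ?hs = tf"
  proof (rule nth_equalityI)
    show "length (map h' ?hs) = length tf" using len by simp
    fix i assume i: "i < length (map h' ?hs)"
    then have i': "i < length ?hs" by simp
    show "map h' ?hs ! i = tf ! i"
    proof (cases "?hs ! i \<in> atom_vars (tgd_body \<tau>)")
      case True
      then have "?hs ! i \<in> exported_vars \<tau>" using i' unfolding exported_vars_def atom_vars_def by auto
      then have "?hs ! i = x" using ex by auto
      then have "i = d" using dist i' d nth_eq_iff_index_eq by metis
      then show ?thesis using True d i' by (simp add: h'_def)
    next
      case False
      then show ?thesis using i' some_idx[OF dist i'] by (simp add: h'_def)
    qed
  qed
  moreover have "\<forall>z\<in>atom_vars (tgd_body \<tau>). h' z = h z" by (simp add: h'_def)
  ultimately show ?thesis using tf(1) unfolding atom_maps_def by auto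
qed

lemma body_witness:
  assumes U: "is_UID ar \<tau>" and ex: "exported_vars \<tau> = {x}"
    and tI: "(atom_rel (tgd_body \<tau>), tI) \<in> I" "length tI = ar (atom_rel (tgd_body \<tau>))"
    and i: "i < length (atom_args (tgd_body \<tau>))" "atom_args (tgd_body \<tau>) ! i = x" "tI ! i = h x"
    and sat: "satisfies_tgd I \<tau>"
  shows "\<exists>h'. (\<forall>z\<in>atom_vars (tgd_body \<tau>). h' z = h z) \<and> atom_maps h' (tgd_head \<tau>) I"
proof -
  let ?bs = "atom_args (tgd_body \<tau>)"
  define g where "g z = tI ! (SOME j. j < length ?bs \<and> ?bs ! j = z)" for z
  have dist: "distinct ?bs" and len: "length tI = length ?bs" using U tI unfolding is_UID_def by auto
  have "map g ?bs = tI" unfolding g_def by (rule map_idx[OF dist len])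
  then have trig: "trigger \<tau> I g" using tI unfolding trigger_def atom_maps_def by simp
  with sat obtain h1 where h1: "\<forall>z\<in>atom_vars (tgd_body \<tau>). h1 z = g z" "atom_maps h1 (tgd_head \<tau>) I"
    unfolding satisfies_tgd_def active_trigger_def by blast
  define h2 where "h2 z = (if z \<in> atom_vars (tgd_body \<tau>) then h z else h1 z)" for z
  have gx: "g x = h x" using some_idx[OF dist i(1)] i unfolding g_def by simp
  have "map h2 (atom_args (tgd_head \<tau>)) = map h1 (atom_args (tgd_head \<tau>))"
  proof (rule map_cong[OF refl])
    fix z assume z: "z \<in> set (atom_args (tgd_head \<tau>))"
    show "h2 z = h1 z"
    proof (cases "z \<in> atom_vars (tgd_body \<tau>)")
      case True
      then have "z \<in> exported_vars \<tau>" using z unfolding exported_vars_def atom_vars_def by auto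
      then have "z = x" using ex by auto
      then show ?thesis using True h1(1) gx by (simp add: h2_def)
    next
      case False then show ?thesis by (simp add: h2_def)
    qed
  qed
  note hm = this
  have "atom_maps h2 (tgd_head \<tau>) I" using h1(2) unfolding atom_maps_def hm .
  moreover have "\<forall>z\<in>atom_vars (tgd_body \<tau>). h2 z = h z" by (simp add: h2_def)
  ultimately show ?thesis by blast
qed

theorem mainTheorem20:
  fixes ar :: "'r \<Rightarrow> nat"
    and \<Sigma>ID :: "('r, 'x) tgd set"
    and \<Sigma>FD :: "'r fd set"
    and I N W :: "('r, 'v) inst"
  assumes UIDs: "\<forall>\<tau>\<in>\<Sigma>ID. is_UID ar \<tau>"
    and FDs: "\<forall>\<phi>\<in>\<Sigma>FD. is_FD ar \<phi>"
    and FDs_nonempty_lhs: "\<forall>(R, D, j)\<in>\<Sigma>FD. D \<noteq> {}"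
    and wfI: "wf_instance ar I"
    and wfN: "wf_instance ar N"
    and I_ID: "\<forall>\<tau>\<in>\<Sigma>ID. satisfies_tgd I \<tau>"
    and I_FD: "\<forall>\<phi>\<in>\<Sigma>FD. satisfies_fd I \<phi>"
    and IN_FD: "\<forall>\<phi>\<in>\<Sigma>FD. satisfies_fd (I \<union> N) \<phi>"
    and pos: "\<forall>a\<in>adom I \<inter> adom N. \<forall>R i. occurs_at N a R i \<longrightarrow> occurs_at I a R i"
    and W: "chase_result (adom I) (adom I \<inter> adom N) \<Sigma>ID N W"
  shows "(\<forall>\<tau>\<in>\<Sigma>ID. satisfies_tgd (I \<union> W) \<tau>) \<and> (\<forall>\<phi>\<in>\<Sigma>FD. satisfies_fd (I \<union> W) \<phi>)"
proof -
  from W obtain C where CS: "chase_seq (adom I) (adom I \<inter> adom N) \<Sigma>ID N C" and Wdef: "W = (\<Union>k. C k)"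
    unfolding chase_result_def by blast
  have C0: "C 0 = N" using CS unfolding chase_seq_def by blast
  have step: "(\<exists>\<tau>\<in>\<Sigma>ID. \<exists>h. allowed_trigger (adom I \<inter> adom N) \<tau> (C k) h \<and> fire (adom I) \<tau> (C k) h (C (Suc k)))
       \<or> ((\<forall>\<tau>\<in>\<Sigma>ID. \<forall>h. \<not> allowed_trigger (adom I \<inter> adom N) \<tau> (C k) h) \<and> C (Suc k) = C k)" for k
    using CS unfolding chase_seq_def by blast
  have fair: "\<exists>m\<ge>k. \<not> active_trigger \<tau> (C m) h"
    if "\<tau> \<in> \<Sigma>ID" "allowed_trigger (adom I \<inter> adom N) \<tau> (C k) h" for k \<tau> h
    using CS that unfolding chase_seq_def by blast
  have mono1: "C k \<subseteq> C (Suc k)" for k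
    using step[of k] unfolding fire_def by blast
  have mono: "k \<le> m \<Longrightarrow> C k \<subseteq> C m" for k m
    by (rule lift_Suc_mono_le[of C, OF mono1])
  have adomI: "(R, t) \<in> J \<Longrightarrow> v \<in> set t \<Longrightarrow> v \<in> adom J" for R t v and J :: "('r,'v) inst"
    unfolding adom_def by blast
  define inv where "inv k \<longleftrightarrow> (\<forall>f\<in>C k. f \<notin> N \<longrightarrow> set (snd f) \<inter> adom I = {} \<and> length (snd f) = ar (fst f)
     \<and> (\<forall>f'\<in>C k. \<forall>d. fst f' = fst f \<longrightarrow> d < length (snd f) \<longrightarrow> d < length (snd f') \<longrightarrow> snd f' ! d = snd f ! d \<longrightarrow> f' = f))" for k
  have invall: "inv k" for k
  proof (induction k)
    case 0 show ?case unfolding inv_def C0 by blast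
  next
    case (Suc k)
    note IH = Suc.IH[unfolded inv_def]
    have lenC: "length (snd f) = ar (fst f)" if "f \<in> C k" for f
      using IH that wfN unfolding wf_instance_def by (cases "f \<in> N") auto
    from step[of k] show ?case
    proof
      assume "(\<forall>\<tau>\<in>\<Sigma>ID. \<forall>h. \<not> allowed_trigger (adom I \<inter> adom N) \<tau> (C k) h) \<and> C (Suc k) = C k"
      then show ?case using Suc.IH unfolding inv_def by simp
    next
      assume "\<exists>\<tau>\<in>\<Sigma>ID. \<exists>h. allowed_trigger (adom I \<inter> adom N) \<tau> (C k) h \<and> fire (adom I) \<tau> (C k) h (C (Suc k))"
      then obtain \<tau> h where \<tau>: "\<tau> \<in> \<Sigma>ID" and al: "allowed_trigger (adom I \<inter> adom N) \<tau> (C k) h"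
        and fi: "fire (adom I) \<tau> (C k) h (C (Suc k))" by blast
      let ?B = "tgd_body \<tau>" let ?H = "tgd_head \<tau>" let ?hs = "atom_args (tgd_head \<tau>)"
      obtain h' where h'1: "\<forall>x\<in>atom_vars ?B. h' x = h x"
        and h'3: "h' ` (atom_vars ?H - atom_vars ?B) \<inter> (adom (C k) \<union> adom I) = {}"
        and CSk: "C (Suc k) = insert (atom_rel ?H, map h' ?hs) (C k)"
        using fi unfolding fire_def by blast
      have U: "is_UID ar \<tau>" using UIDs \<tau> by blast
      then obtain x where ex: "exported_vars \<tau> = {x}" unfolding is_UID_def by (meson card_1_singletonE)
      have act: "active_trigger \<tau> (C k) h" and notD: "\<forall>y\<in>exported_vars \<tau>. h y \<notin> adom I \<inter> adom N"
        using al unfolding allowed_trigger_def by auto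
      have bf: "(atom_rel ?B, map h (atom_args ?B)) \<in> C k"
        using act unfolding active_trigger_def trigger_def atom_maps_def by simp
      define nf where "nf = (atom_rel ?H, map h' ?hs)"
      have B: "set (snd nf) \<inter> adom I = {}"
      proof -
        { fix v assume v: "v \<in> set (snd nf)" "v \<in> adom I"
          then obtain y where y: "y \<in> set ?hs" "v = h' y" unfolding nf_def by auto
          have False
          proof (cases "y \<in> atom_vars ?B")
            case True
            then have ye: "y \<in> exported_vars \<tau>" using y unfolding exported_vars_def atom_vars_def by auto
            have vh: "v = h y" using True h'1 y by simp
            have vin: "v \<in> set (map h (atom_args ?B))" using True vh unfolding atom_vars_def by simp
            show False
            proof (cases "(atom_rel ?B, map h (atom_args ?B)) \<in> N")
              case True
              then have "v \<in> adom N" using vin adomI by blast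
              then show False using notD ye vh v(2) by blast
            next
              case False
              have "set (snd (atom_rel ?B, map h (atom_args ?B))) \<inter> adom I = {}"
                using IH bf False by blast
              then show False using vin v(2) by auto
            qed
          next
            case False
            then show False using h'3 y v(2) unfolding atom_vars_def by auto
          qed }
        then show ?thesis by blast
      qed
      have Cl: "length (snd nf) = ar (fst nf)" using U unfolding nf_def is_UID_def by simp
      have D: False if f': "f' \<in> C k" "fst f' = fst nf" "d < length (snd nf)" "d < length (snd f')"
          "snd f' ! d = snd nf ! d" for f' d
      proof -
        obtain S tf where f'e: "f' = (S, tf)" by (cases f')
        have S: "S = atom_rel ?H" using f' f'e unfolding nf_def by simp
        have dl: "d < length ?hs" using f' unfolding nf_def by simp
        have eq: "tf ! d = h' (?hs ! d)" using f' f'e dl unfolding nf_def by simp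
        show False
        proof (cases "?hs ! d \<in> atom_vars ?B")
          case True
          then have "?hs ! d \<in> exported_vars \<tau>" using dl unfolding exported_vars_def atom_vars_def by auto
          then have hx: "?hs ! d = x" using ex by auto
          have lt: "length tf = ar (atom_rel ?H)" using lenC[OF f'(1)] f'e S by simp
          have "tf ! d = h x" using eq hx True h'1 by simp
          then have "\<exists>h''. (\<forall>z\<in>atom_vars ?B. h'' z = h z) \<and> atom_maps h'' ?H (C k)"
            using head_witness[OF U ex _ lt dl hx] f'(1) f'e S by auto
          then show False using act unfolding active_trigger_def by blast
        next
          case False
          then have "?hs ! d \<in> atom_vars ?H - atom_vars ?B" using dl unfolding atom_vars_def by auto
          then have "h' (?hs ! d) \<notin> adom (C k)" using h'3 by blast
          moreover have "tf ! d \<in> set tf" using f'(4) f'e by simp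
          then have "h' (?hs ! d) \<in> adom (C k)" using adomI f'(1) f'e eq by metis
          ultimately show False by blast
        qed
      qed
      show ?case unfolding inv_def CSk nf_def[symmetric]
      proof (intro ballI impI)
        fix f assume f: "f \<in> insert nf (C k)" "f \<notin> N"
        show "set (snd f) \<inter> adom I = {} \<and> length (snd f) = ar (fst f) \<and>
          (\<forall>f'\<in>insert nf (C k). \<forall>d. fst f' = fst f \<longrightarrow> d < length (snd f) \<longrightarrow>
             d < length (snd f') \<longrightarrow> snd f' ! d = snd f ! d \<longrightarrow> f' = f)"
        proof (cases "f = nf")
          case True
          then show ?thesis using B Cl D by blast
        next
          case False
          then have fC: "f \<in> C k" using f by simp
          have old: "set (snd f) \<inter> adom I = {} \<and> length (snd f) = ar (fst f) \<and>
            (\<forall>f'\<in>C k. \<forall>d. fst f' = fst f \<longrightarrow> d < length (snd f) \<longrightarrow>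
             d < length (snd f') \<longrightarrow> snd f' ! d = snd f ! d \<longrightarrow> f' = f)"
            using IH fC f(2) by blast
          have "\<not> (fst nf = fst f \<and> d < length (snd f) \<and> d < length (snd nf) \<and> snd nf ! d = snd f ! d)" for d
            using D[of f d] fC by auto
          then show ?thesis using old by blast
        qed
      qed
    qed
  qed
  have inW: "f \<in> W \<Longrightarrow> \<exists>k. f \<in> C k" for f using Wdef by blast
  have WC: "\<exists>m. f \<in> C m \<and> f' \<in> C m" if ff: "f \<in> W" "f' \<in> W" for f f'
  proof -
    obtain k k' where "f \<in> C k" "f' \<in> C k'" using ff inW by blast
    then show ?thesis using mono[of k "max k k'"] mono[of k' "max k k'"] by auto
  qed
  have lenW: "length t = ar R" if "(R, t) \<in> W" for R t
  proof -
    obtain k where k: "(R, t) \<in> C k" using \<open>(R, t) \<in> W\<close> inW by blast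
    show ?thesis using invall[of k] k wfN unfolding inv_def wf_instance_def by (cases "(R, t) \<in> N") auto
  qed
  have gen: "t = t'" if t: "(R, t) \<in> W" "(R, t) \<notin> N" and t': "(R, t') \<in> I \<union> W"
      and d: "d < ar R" "t ! d = t' ! d" for R t t' d
  proof -
    obtain k where k: "(R, t) \<in> C k" using t inW by blast
    have "set (snd (R, t)) \<inter> adom I = {}" using invall[of k] k t(2) unfolding inv_def by blast
    then have dis: "set t \<inter> adom I = {}" by simp
    have lt: "length t = ar R" using lenW t by blast
    show ?thesis
    proof (cases "(R, t') \<in> I")
      case True
      have "length t' = ar R" using True wfI unfolding wf_instance_def by auto
      then have "d < length t'" using d(1) by simp
      then have "t' ! d \<in> set t'" by (rule nth_mem)
      then have "t' ! d \<in> adom I" using True adomI by blast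
      moreover have "d < length t" using lt d(1) by simp
      then have "t ! d \<in> set t" by (rule nth_mem)
      ultimately have "t ! d \<in> set t \<inter> adom I" using d(2) by simp
      then show ?thesis using dis by simp
    next
      case False
      then have tW: "(R, t') \<in> W" using t' by blast
      obtain m where m: "(R, t) \<in> C m" "(R, t') \<in> C m" using WC[OF t(1) tW] by blast
      have "length t' = ar R" using lenW tW by blast
      then have l2: "d < length (snd (R, t'))" using d(1) by simp
      have "\<forall>f'\<in>C m. \<forall>d. fst f' = fst (R, t) \<longrightarrow> d < length (snd (R, t)) \<longrightarrow>
             d < length (snd f') \<longrightarrow> snd f' ! d = snd (R, t) ! d \<longrightarrow> f' = (R, t)"
        using invall[of m] m t(2) unfolding inv_def by blast
      then have "(R, t') = (R, t)" using m(2) l2 lt d by simp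
      then show ?thesis by simp
    qed
  qed
  have FD: "satisfies_fd (I \<union> W) \<phi>" if \<phi>: "\<phi> \<in> \<Sigma>FD" for \<phi>
  proof -
    obtain R D j where \<phi>e: "\<phi> = (R, D, j)" by (cases \<phi>)
    have Dsub: "D \<subseteq> {..<ar R}" and Dne: "D \<noteq> {}"
      using FDs FDs_nonempty_lhs \<phi> \<phi>e unfolding is_FD_def by auto
    then obtain d where d: "d \<in> D" "d < ar R" by blast
    have INs: "\<forall>t t'. (R, t) \<in> I \<union> N \<longrightarrow> (R, t') \<in> I \<union> N \<longrightarrow> (\<forall>i\<in>D. t ! i = t' ! i) \<longrightarrow> t ! j = t' ! j"
    proof -
      have "(R, D, j) \<in> \<Sigma>FD" using \<phi> \<phi>e by simp
      then have "satisfies_fd (I \<union> N) (R, D, j)" by (rule bspec[OF IN_FD])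
      then show ?thesis unfolding satisfies_fd_def prod.case .
    qed
    have "t ! j = t' ! j" if tt: "(R, t) \<in> I \<union> W" "(R, t') \<in> I \<union> W" "\<forall>i\<in>D. t ! i = t' ! i" for t t'
    proof (cases "(R, t) \<in> I \<union> N \<and> (R, t') \<in> I \<union> N")
      case True then show ?thesis using INs tt by blast
    next
      case False
      then consider "(R, t) \<in> W" "(R, t) \<notin> N" | "(R, t') \<in> W" "(R, t') \<notin> N" using tt by blast
      then show ?thesis
      proof cases
        case 1 then have "t = t'" using gen[of R t t' d] tt d by blast
        then show ?thesis by simp
      next
        case 2 then have "t' = t" using gen[of R t' t d] tt d by simp
        then show ?thesis by simp
      qed
    qed
    then show ?thesis unfolding satisfies_fd_def \<phi>e prod.case by blast
  qed
  have TGD: "satisfies_tgd (I \<union> W) \<tau>" if \<tau>: "\<tau> \<in> \<Sigma>ID" for \<tau>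
    unfolding satisfies_tgd_def
  proof (intro allI notI)
    fix h assume act: "active_trigger \<tau> (I \<union> W) h"
    let ?B = "tgd_body \<tau>" let ?bs = "atom_args (tgd_body \<tau>)"
    have nowit: "\<not> (\<exists>h'. (\<forall>z\<in>atom_vars ?B. h' z = h z) \<and> atom_maps h' (tgd_head \<tau>) (I \<union> W))"
      using act unfolding active_trigger_def by blast
    have bf: "(atom_rel ?B, map h ?bs) \<in> I \<union> W"
      using act unfolding active_trigger_def trigger_def atom_maps_def by simp
    have U: "is_UID ar \<tau>" using UIDs \<tau> by blast
    then obtain x where ex: "exported_vars \<tau> = {x}" unfolding is_UID_def by (meson card_1_singletonE)
    have wit: "\<exists>h'. (\<forall>z\<in>atom_vars ?B. h' z = h z) \<and> atom_maps h' (tgd_head \<tau>) (I \<union> W)"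
    proof (cases "(atom_rel ?B, map h ?bs) \<in> I")
      case True
      then have "trigger \<tau> I h" unfolding trigger_def atom_maps_def by simp
      then have "\<not> active_trigger \<tau> I h" using I_ID \<tau> unfolding satisfies_tgd_def by blast
      then obtain h' where "(\<forall>z\<in>atom_vars ?B. h' z = h z)" "atom_maps h' (tgd_head \<tau>) I"
        using \<open>trigger \<tau> I h\<close> unfolding active_trigger_def by blast
      then show ?thesis unfolding atom_maps_def by blast
    next
      case False
      then have bW: "(atom_rel ?B, map h ?bs) \<in> W" using bf by blast
      then obtain k where k: "(atom_rel ?B, map h ?bs) \<in> C k" using inW by blast
      have "x \<in> atom_vars ?B" using ex unfolding exported_vars_def by blast
      then obtain i where i: "i < length ?bs" "?bs ! i = x" unfolding atom_vars_def by (metis in_set_conv_nth)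
      show ?thesis
      proof (cases "h x \<in> adom I")
        case True
        have hxs: "h x \<in> set (map h ?bs)" using i by (metis nth_map nth_mem length_map)
        have inN: "(atom_rel ?B, map h ?bs) \<in> N"
        proof (rule ccontr)
          assume "(atom_rel ?B, map h ?bs) \<notin> N"
          then have "set (snd (atom_rel ?B, map h ?bs)) \<inter> adom I = {}" using invall[of k] k unfolding inv_def by blast
          then show False using True hxs by auto
        qed
        have "h x \<in> adom N" using inN hxs adomI by blast
        moreover have "occurs_at N (h x) (atom_rel ?B) i" unfolding occurs_at_def using inN i by auto
        ultimately have "occurs_at I (h x) (atom_rel ?B) i" using pos True by blast
        then obtain tI where tI: "(atom_rel ?B, tI) \<in> I" "i < length tI" "tI ! i = h x"
          unfolding occurs_at_def by blast
        have "length tI = ar (atom_rel ?B)" using tI(1) wfI unfolding wf_instance_def by auto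
        then obtain h' where "(\<forall>z\<in>atom_vars ?B. h' z = h z)" "atom_maps h' (tgd_head \<tau>) I"
          using body_witness[where h=h, OF U ex tI(1) _ i tI(3)] I_ID \<tau> by blast
        then show ?thesis unfolding atom_maps_def by blast
      next
        case False
        have trk: "trigger \<tau> (C m) h" if "k \<le> m" for m
          using k mono[OF that] unfolding trigger_def atom_maps_def by blast
        have "\<exists>m. \<not> active_trigger \<tau> (C m) h \<and> trigger \<tau> (C m) h"
        proof (cases "active_trigger \<tau> (C k) h")
          case True
          then have "allowed_trigger (adom I \<inter> adom N) \<tau> (C k) h"
            unfolding allowed_trigger_def using ex False by auto
          then obtain m where "m \<ge> k" "\<not> active_trigger \<tau> (C m) h" using fair \<tau> by blast
          then show ?thesis using trk by blast
        next
          case False then show ?thesis using trk by blast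
        qed
        then obtain m h' where "(\<forall>z\<in>atom_vars ?B. h' z = h z)" "atom_maps h' (tgd_head \<tau>) (C m)"
          unfolding active_trigger_def by blast
        then show ?thesis unfolding atom_maps_def Wdef by blast
      qed
    qed
    then show False using nowit by blast
  qed
  show ?thesis using FD TGD by blast
qed

end
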